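(* Let $m\ge n$. Then every instance with $n$ agents having identical monotone valuations and $m$ goods has at least $n!$ EFX allocations, and there exists an instance with $n$ agents having identical additive valuations and $m$ goods that has exactly $n!$ EFX allocations. *)

theory Defs
  imports Complex_Main "HOL-Library.FuncSet"
begin


definition bundle_of :: "nat \<Rightarrow> (nat \<Rightarrow> nat) \<Rightarrow> nat \<Rightarrow> nat set" where
  "bundle_of m A i = {g \<in> {0..<m}. A g = i}"

definition allocations :: "nat \<Rightarrow> nat \<Rightarrow> (nat \<Rightarrow> nat) set" where
  "allocations n m = {0..<m} \<rightarrow>\<^sub>E {0..<n}"

definition monotone_valuation :: "nat \<Rightarrow> (nat set \<Rightarrow> real) \<Rightarrow> bool" where
  "monotone_valuation m v \<longleftrightarrow> v {} = 0 \<and>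
     (\<forall>S T. S \<subseteq> T \<and> T \<subseteq> {0..<m} \<longrightarrow> v S \<le> v T)"

definition additive_valuation :: "nat \<Rightarrow> (nat set \<Rightarrow> real) \<Rightarrow> bool" where
  "additive_valuation m v \<longleftrightarrow> (\<exists>val :: nat \<Rightarrow> real.
     (\<forall>g < m. 0 \<le> val g) \<and> (\<forall>S. S \<subseteq> {0..<m} \<longrightarrow> v S = (\<Sum>g\<in>S. val g)))"

definition EFX :: "nat \<Rightarrow> nat \<Rightarrow> (nat set \<Rightarrow> real) \<Rightarrow> (nat \<Rightarrow> nat) \<Rightarrow> bool" where
  "EFX n m v A \<longleftrightarrow> (\<forall>i < n. \<forall>j < n. \<forall>g \<in> bundle_of m A j.
      v (bundle_of m A j - {g}) \<le> v (bundle_of m A i))"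

definition EFX_allocations :: "nat \<Rightarrow> nat \<Rightarrow> (nat set \<Rightarrow> real) \<Rightarrow> (nat \<Rightarrow> nat) set" where
  "EFX_allocations n m v = {A \<in> allocations n m. EFX n m v A}"

end

theory Submission
  imports Defs "HOL-Library.Multiset_Order" "HOL-Library.Product_Lexorder" "HOL-Combinatorics.Permutations"
begin


definition pr :: "(nat set \<Rightarrow> real) \<Rightarrow> nat \<Rightarrow> (nat \<Rightarrow> nat) \<Rightarrow> nat \<Rightarrow> real \<times> real" where
  "pr v m A i = (- v (bundle_of m A i), - real (card (bundle_of m A i)))"

definition Phi :: "nat \<Rightarrow> (nat set \<Rightarrow> real) \<Rightarrow> nat \<Rightarrow> (nat \<Rightarrow> nat) \<Rightarrow> (real \<times> real) multiset" where
  "Phi n v m A = image_mset (pr v m A) (mset_set {0..<n})"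

lemma move:
  assumes "i<n" "j<n" "i\<noteq>j" "A g = j"
    and l1: "pr v m (A(g:=i)) i < pr v m A i" and l2: "pr v m (A(g:=i)) j < pr v m A i"
  shows "Phi n v m (A(g:=i)) < Phi n v m A"
proof -
  let ?A' = "A(g:=i)"
  let ?R = "{0..<n}-{i,j}"
  have same: "pr v m ?A' k = pr v m A k" if "k \<in> ?R" for k
  proof -
    have "bundle_of m ?A' k = bundle_of m A k" using that assms(4) unfolding bundle_of_def by auto
    thus ?thesis unfolding pr_def by simp
  qed
  have ins: "{0..<n} = insert i (insert j ?R)" using assms by auto
  have sp: "mset_set {0..<n} = add_mset i (add_mset j (mset_set ?R))"
    by (subst ins) (use assms in simp)
  have I: "image_mset (pr v m ?A') (mset_set ?R) = image_mset (pr v m A) (mset_set ?R)"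
    by (rule image_mset_cong) (simp add: same)
  define I0 where "I0 = image_mset (pr v m A) (mset_set ?R)"
  have e1: "Phi n v m ?A' = I0 + {#pr v m ?A' i, pr v m ?A' j#}"
    unfolding Phi_def sp I0_def using I by simp
  have e2: "Phi n v m A = I0 + {#pr v m A i, pr v m A j#}"
    unfolding Phi_def sp I0_def by simp
  have "multp (<) (I0 + {#pr v m ?A' i, pr v m ?A' j#}) (I0 + {#pr v m A i, pr v m A j#})"
    by (rule one_step_implies_multp) (use l1 l2 in auto)
  thus ?thesis unfolding e1 e2 less_multiset_def .
qed

lemma bundle_upd_i:
  assumes "g < m" shows "bundle_of m (A(g:=i)) i = insert g (bundle_of m A i)"
  using assms unfolding bundle_of_def by auto

lemma bundle_upd_j:
  assumes "A g = j" "i \<noteq> j" shows "bundle_of m (A(g:=i)) j = bundle_of m A j - {g}"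
  using assms unfolding bundle_of_def by auto

lemma bundle_sub: "bundle_of m A i \<subseteq> {0..<m}" unfolding bundle_of_def by auto
lemma bundle_fin: "finite (bundle_of m A i)" by (rule finite_subset[OF bundle_sub]) simp

lemma alloc_upd:
  assumes "A \<in> allocations n m" "g < m" "i < n" shows "A(g:=i) \<in> allocations n m"
  using assms unfolding allocations_def by (auto simp: PiE_iff extensional_def)

lemma exists_good:
  assumes mv: "monotone_valuation m v" and "1 \<le> n" "n \<le> m"
  shows "\<exists>A \<in> allocations n m. EFX n m v A \<and> (\<forall>i<n. bundle_of m A i \<noteq> {})"
proof -
  have fin: "finite (allocations n m)" unfolding allocations_def by (simp add: finite_PiE)
  have ne: "allocations n m \<noteq> {}" unfolding allocations_def using assms(2)
    by (simp add: PiE_eq_empty_iff del: PiE_empty_domain)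
  let ?S = "Phi n v m ` allocations n m"
  obtain A where A: "A \<in> allocations n m" "Phi n v m A = Min ?S"
  proof -
    have "Min ?S \<in> ?S" using fin ne by (intro Min_in) auto
    then obtain A0 where "A0 \<in> allocations n m" "Min ?S = Phi n v m A0" by (rule imageE)
    then show ?thesis by (intro that) auto
  qed
  have minA: "Phi n v m A \<le> Phi n v m A'" if "A' \<in> allocations n m" for A'
  proof -
    have "Phi n v m A' \<in> ?S" using that by (rule imageI)
    thus ?thesis unfolding A(2) by (rule Min_le[OF finite_imageI[OF fin]])
  qed
  have v0: "v {} = 0" and vmono: "\<And>S T. S \<subseteq> T \<Longrightarrow> T \<subseteq> {0..<m} \<Longrightarrow> v S \<le> v T"
    using mv unfolding monotone_valuation_def by auto
  have vnn: "0 \<le> v (bundle_of m A' k)" for A' k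
    using vmono[of "{}" "bundle_of m A' k", OF empty_subsetI bundle_sub] v0 by simp
  obtain i0 where i0: "i0 < n" "\<And>k. k < n \<Longrightarrow> pr v m A k \<le> pr v m A i0"
  proof -
    let ?P = "pr v m A ` {0..<n}"
    have "Max ?P \<in> ?P" using assms(2) by (intro Max_in) auto
    then obtain i0 where "i0 < n" "pr v m A i0 = Max ?P" by auto
    thus ?thesis using that by auto
  qed
  have Ag: "A g < n" if "g < m" for g using A(1) that unfolding allocations_def by auto
  have key: "False" if "j < n" "g < m" "A g = j" "i0 \<noteq> j"
     "pr v m (A(g:=i0)) i0 < pr v m A i0" "pr v m (A(g:=i0)) j < pr v m A i0" for j g
  proof -
    have "Phi n v m (A(g:=i0)) < Phi n v m A" using move[OF i0(1) that(1,4,3,5,6)] .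
    moreover have "Phi n v m A \<le> Phi n v m (A(g:=i0))" using minA alloc_upd[OF A(1) that(2) i0(1)] .
    ultimately show False by simp
  qed
  have gnot: "g \<notin> bundle_of m A i0" if "A g = j" "i0 \<noteq> j" for g j
    using that unfolding bundle_of_def by auto
  have EFX: "EFX n m v A"
    unfolding EFX_def
  proof (intro allI impI ballI)
    fix i j g assume ij: "i < n" "j < n" "g \<in> bundle_of m A j"
    show "v (bundle_of m A j - {g}) \<le> v (bundle_of m A i)"
    proof (rule ccontr)
      assume c: "\<not> ?thesis"
      have gm: "g < m" "A g = j" using ij(3) unfolding bundle_of_def by auto
      have "pr v m A i \<le> pr v m A i0" using i0(2) ij(1) .
      hence le1: "v (bundle_of m A i0) \<le> v (bundle_of m A i)"
        unfolding pr_def by (auto simp: less_eq_prod_def)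
      have ne: "i0 \<noteq> j"
      proof
        assume "i0 = j"
        have "v (bundle_of m A j - {g}) \<le> v (bundle_of m A j)"
          using vmono bundle_sub by blast
        thus False using c le1 \<open>i0 = j\<close> by simp
      qed
      have vi: "v (bundle_of m A i0) \<le> v (insert g (bundle_of m A i0))"
        using vmono[of "bundle_of m A i0" "insert g (bundle_of m A i0)"] bundle_sub gm by auto
      have ci: "card (insert g (bundle_of m A i0)) = Suc (card (bundle_of m A i0))"
        using gnot[OF gm(2) ne] bundle_fin by simp
      show False
      proof (rule key[OF ij(2) gm(1) gm(2) ne])
        show "pr v m (A(g:=i0)) i0 < pr v m A i0"
          unfolding pr_def bundle_upd_i[OF gm(1)] using vi ci by (auto simp: less_prod_def)
        show "pr v m (A(g:=i0)) j < pr v m A i0"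
          unfolding pr_def bundle_upd_j[where A=A and g=g and j=j and i=i0, OF gm(2) ne] using c le1 by (auto simp: less_prod_def)
      qed
    qed
  qed
  moreover have "\<forall>i<n. bundle_of m A i \<noteq> {}"
  proof (rule ccontr)
    assume "\<not> ?thesis"
    then obtain i where i: "i < n" "bundle_of m A i = {}" by auto
    have "A ` {0..<m} \<subseteq> {0..<n} - {i}" using i Ag unfolding bundle_of_def by auto
    hence "\<not> inj_on A {0..<m}"
      using card_inj_on_le[of A "{0..<m}" "{0..<n} - {i}"] i assms by auto
    then obtain g g' where gg: "g < m" "g' < m" "g \<noteq> g'" "A g = A g'"
      unfolding inj_on_def by auto
    define j where "j = A g"
    have jn: "j < n" using Ag gg j_def by auto
    have pi: "pr v m A i = (0,0)" unfolding pr_def i(2) v0 by simp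
    have "pr v m A i0 \<le> (0,0)" unfolding pr_def using vnn by (auto simp: less_eq_prod_def)
    moreover have "(0,0) \<le> pr v m A i0" using i0(2)[OF i(1)] pi by simp
    ultimately have p0: "pr v m A i0 = (0,0)" by simp
    hence "card (bundle_of m A i0) = 0" unfolding pr_def by simp
    hence e0: "bundle_of m A i0 = {}" using bundle_fin by auto
    have gj: "g \<in> bundle_of m A j" "g' \<in> bundle_of m A j" using gg j_def unfolding bundle_of_def by auto
    have ne: "i0 \<noteq> j" using e0 gj by auto
    have "g' \<in> bundle_of m A j - {g}" using gj gg by auto
    hence c1: "card (bundle_of m A j - {g}) \<noteq> 0" using bundle_fin
      by (metis card_0_eq empty_iff finite_Diff)
    have vg: "0 \<le> v {g}" using vmono[of "{}" "{g}"] v0 gg by auto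
    have vj: "0 \<le> v (bundle_of m A j - {g})" using vmono[of "{}" "bundle_of m A j - {g}"] v0 bundle_sub by auto
    show False
    proof (rule key[OF jn gg(1) j_def[symmetric] ne])
      show "pr v m (A(g:=i0)) i0 < pr v m A i0"
        unfolding p0 unfolding pr_def bundle_upd_i[OF gg(1)] e0 using vg by (auto simp: less_prod_def)
      show "pr v m (A(g:=i0)) j < pr v m A i0"
        unfolding p0 unfolding pr_def bundle_upd_j[where A=A and g=g and j=j and i=i0, OF j_def[symmetric] ne] using c1 vj
        by (auto simp: less_prod_def)
    qed
  qed
  ultimately show ?thesis using A(1) by blast
qed



definition perm_alloc :: "nat \<Rightarrow> (nat\<Rightarrow>nat) \<Rightarrow> (nat\<Rightarrow>nat) \<Rightarrow> (nat\<Rightarrow>nat)" where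
 "perm_alloc m \<sigma> A = (\<lambda>g. if g < m then \<sigma> (A g) else undefined)"

lemma perm_alloc_bundle:
  assumes "\<sigma> permutes {0..<n}"
  shows "bundle_of m (perm_alloc m \<sigma> A) k = bundle_of m A (inv \<sigma> k)"
  unfolding bundle_of_def perm_alloc_def using permutes_inverses[OF assms] by (auto intro!: bexI)

lemma perm_alloc_alloc:
  assumes "A \<in> allocations n m" "\<sigma> permutes {0..<n}"
  shows "perm_alloc m \<sigma> A \<in> allocations n m"
  using assms permutes_in_image[OF assms(2)] unfolding allocations_def perm_alloc_def
  by (auto simp: PiE_iff extensional_def)

lemma perm_alloc_EFX:
  assumes "EFX n m v A" "\<sigma> permutes {0..<n}"
  shows "EFX n m v (perm_alloc m \<sigma> A)"
  unfolding EFX_def perm_alloc_bundle[OF assms(2)]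
proof (intro allI impI ballI)
  fix i j g assume ij: "i < n" "j < n" "g \<in> bundle_of m A (inv \<sigma> j)"
  have p: "inv \<sigma> permutes {0..<n}" using permutes_inv[OF assms(2)] .
  have "inv \<sigma> i < n" "inv \<sigma> j < n" using permutes_in_image[OF p] ij by auto
  thus "v (bundle_of m A (inv \<sigma> j) - {g}) \<le> v (bundle_of m A (inv \<sigma> i))"
    using assms(1) ij(3) unfolding EFX_def by blast
qed

lemma fin_EFX: "finite (EFX_allocations n m v)"
  unfolding EFX_allocations_def allocations_def by (simp add: finite_PiE)

lemma count_lower:
  assumes "A \<in> EFX_allocations n m v" "\<forall>i<n. bundle_of m A i \<noteq> {}"
  shows "fact n \<le> card (EFX_allocations n m v)"
proof -
  let ?P = "{\<sigma>. \<sigma> permutes {0..<n}}"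
  have cP: "card ?P = fact n" by (rule card_permutations) auto
  have A: "A \<in> allocations n m" "EFX n m v A" using assms(1) unfolding EFX_allocations_def by auto
  have inj: "inj_on (\<lambda>\<sigma>. perm_alloc m \<sigma> A) ?P"
  proof (rule inj_onI)
    fix \<sigma> \<tau> assume s: "\<sigma> \<in> ?P" "\<tau> \<in> ?P" and eq: "perm_alloc m \<sigma> A = perm_alloc m \<tau> A"
    show "\<sigma> = \<tau>"
    proof
      fix k show "\<sigma> k = \<tau> k"
      proof (cases "k < n")
        case True
        then obtain g where g: "g \<in> bundle_of m A k" using assms(2) by blast
        hence "g < m" "A g = k" unfolding bundle_of_def by auto
        with fun_cong[OF eq, of g] show ?thesis unfolding perm_alloc_def by simp
      next
        case False
        thus ?thesis using s permutes_not_in[of \<sigma> "{0..<n}" k] permutes_not_in[of \<tau> "{0..<n}" k] by simp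
      qed
    qed
  qed
  have sub: "(\<lambda>\<sigma>. perm_alloc m \<sigma> A) ` ?P \<subseteq> EFX_allocations n m v"
    using perm_alloc_alloc[OF A(1)] perm_alloc_EFX[OF A(2)] unfolding EFX_allocations_def by auto
  have "card ?P \<le> card (EFX_allocations n m v)"
    by (rule card_inj_on_le[OF inj sub fin_EFX])
  thus ?thesis using cP by simp
qed



lemma upper:
  assumes n1: "1 \<le> n" and nm: "n \<le> m"
    and vdef: "v = (\<lambda>S. \<Sum>g\<in>S. (if g < n-1 then real m + 1 else 1))"
    and AE: "A \<in> EFX_allocations n m v"
  shows "A \<in> (\<lambda>\<sigma>. perm_alloc m \<sigma> (\<lambda>g. if g < n-1 then g else n-1)) ` {\<sigma>. \<sigma> permutes {0..<n}}"
proof -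
  define val where "val = (\<lambda>g::nat. if g < n-1 then real m + 1 else 1)"
  have vS: "v S = (\<Sum>g\<in>S. val g)" for S unfolding vdef val_def by simp
  let ?L = "{0..<n-1}"
  have A: "A \<in> allocations n m" "EFX n m v A" using AE unfolding EFX_allocations_def by auto
  have Ag: "A g < n" if "g < m" for g using A(1) that unfolding allocations_def by auto
  have Aext: "A g = undefined" if "\<not> g < m" for g using A(1) that unfolding allocations_def
    by (auto simp: PiE_iff extensional_def)
  have fb: "finite (bundle_of m A j)" for j unfolding bundle_of_def by auto
  have big: "v S \<ge> real m + 1" if "finite S" "h \<in> S" "h < n-1" for S h
  proof -
    have "val h \<le> (\<Sum>g\<in>S. val g)"
      by (rule member_le_sum) (use that in \<open>auto simp: val_def\<close>)
    thus ?thesis using that unfolding vS val_def by simp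
  qed
  have small: "v S \<le> real m" if "S \<subseteq> {0..<m}" "\<forall>h\<in>S. \<not> h < n-1" for S
  proof -
    have "v S = (\<Sum>g\<in>S. 1)" unfolding vS val_def using that(2) by (intro sum.cong) auto
    also have "\<dots> = real (card S)" by simp
    also have "\<dots> \<le> real m" using card_mono[OF _ that(1)] by simp
    finally show ?thesis .
  qed
  have LA: "A ` ?L \<subseteq> {0..<n}" using Ag nm by auto
  have "card (A ` ?L) < card {0..<n}"
    using card_image_le[of ?L A] n1 by simp
  hence "\<not> {0..<n} \<subseteq> A ` ?L" using card_mono[of "A ` ?L" "{0..<n}"] by auto
  then obtain i0 where i0: "i0 \<in> {0..<n}" "i0 \<notin> A ` ?L" by blast
  then obtain i where i: "i < n" "i \<notin> A ` ?L" by auto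
  have vi: "v (bundle_of m A i) \<le> real m"
    by (rule small) (use i in \<open>auto simp: bundle_of_def\<close>)
  have noL: "\<not> h < n-1" if "j < n" "g \<in> bundle_of m A j" "h \<in> bundle_of m A j - {g}" for j g h
  proof
    assume h: "h < n-1"
    have "v (bundle_of m A j - {g}) \<le> v (bundle_of m A i)"
      using A(2) that(1,2) i(1) unfolding EFX_def by blast
    moreover have "v (bundle_of m A j - {g}) \<ge> real m + 1" using big[OF _ that(3) h] fb by simp
    ultimately show False using vi by simp
  qed
  have inj: "inj_on A ?L"
  proof (rule inj_onI)
    fix h h' assume hh: "h \<in> ?L" "h' \<in> ?L" "A h = A h'"
    show "h = h'"
    proof (rule ccontr)
      assume ne: "h \<noteq> h'"
      have "h < m" "h' < m" using hh nm by auto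
      hence "h \<in> bundle_of m A (A h)" "h' \<in> bundle_of m A (A h) - {h}" using hh ne unfolding bundle_of_def by auto
      thus False using noL[OF Ag[OF \<open>h < m\<close>]] hh by auto
    qed
  qed
  have sm: "A g \<notin> A ` ?L" if "n-1 \<le> g" "g < m" for g
  proof
    assume "A g \<in> A ` ?L"
    then obtain h where h: "h < n-1" "A h = A g" by auto
    have "h \<noteq> g" using h that by auto
    have "h < m" using h nm by auto
    have "g \<in> bundle_of m A (A g)" "h \<in> bundle_of m A (A g) - {g}"
      using that h \<open>h \<noteq> g\<close> \<open>h < m\<close> unfolding bundle_of_def by auto
    thus False using noL[OF Ag[OF that(2)]] h by blast
  qed
  define a where "a = A (n-1)"
  have nm1: "n - 1 < m" using n1 nm by auto
  have a: "a < n" "a \<notin> A ` ?L" using Ag[OF nm1] sm[OF _ nm1] a_def by auto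
  have card1: "card ({0..<n} - A ` ?L) = 1"
    using card_Diff_subset[OF _ LA] card_image[OF inj] n1 by simp
  have allA: "A g = a" if "n-1 \<le> g" "g < m" for g
  proof -
    have "A g \<in> {0..<n} - A ` ?L" "a \<in> {0..<n} - A ` ?L" using Ag[OF that(2)] sm[OF that] a by auto
    thus ?thesis using card1 by (metis card_1_singletonE singletonD)
  qed
  define \<sigma> where "\<sigma> = (\<lambda>k. if k < n-1 then A k else if k = n-1 then a else k)"
  have sub: "\<sigma> ` {0..<n} \<subseteq> {0..<n}" using LA a unfolding \<sigma>_def by auto
  have injs: "inj_on \<sigma> {0..<n}"
  proof (rule inj_onI)
    fix x y assume xy: "x \<in> {0..<n}" "y \<in> {0..<n}" "\<sigma> x = \<sigma> y"
    show "x = y"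
    proof (cases "x < n-1"; cases "y < n-1")
      assume "x < n-1" "y < n-1" thus ?thesis using xy inj unfolding \<sigma>_def inj_on_def by auto
    next
      assume "x < n-1" "\<not> y < n-1" thus ?thesis using xy a unfolding \<sigma>_def by (auto split: if_splits simp: image_iff)
    next
      assume "\<not> x < n-1" "y < n-1" thus ?thesis using xy a unfolding \<sigma>_def by (auto split: if_splits simp: image_iff)
    next
      assume "\<not> x < n-1" "\<not> y < n-1" thus ?thesis using xy by auto
    qed
  qed
  have "\<sigma> ` {0..<n} = {0..<n}" by (rule endo_inj_surj[OF _ sub injs]) simp
  hence "bij_betw \<sigma> {0..<n} {0..<n}" using injs unfolding bij_betw_def by simp
  hence perm: "\<sigma> permutes {0..<n}" by (rule bij_imp_permutes) (use n1 in \<open>auto simp: \<sigma>_def\<close>)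
  have "A = perm_alloc m \<sigma> (\<lambda>g. if g < n-1 then g else n-1)"
  proof
    fix g show "A g = perm_alloc m \<sigma> (\<lambda>g. if g < n-1 then g else n-1) g"
      using Aext[of g] allA[of g] unfolding perm_alloc_def \<sigma>_def a_def by auto
  qed
  thus ?thesis using perm by blast
qed


theorem theorem9:
  fixes n m :: nat
  assumes "1 \<le> n" and "n \<le> m"
  shows "(\<forall>v. monotone_valuation m v \<longrightarrow> fact n \<le> card (EFX_allocations n m v))
       \<and> (\<exists>v. additive_valuation m v \<and> card (EFX_allocations n m v) = fact n)"
proof -
  have p1: "\<forall>v. monotone_valuation m v \<longrightarrow> fact n \<le> card (EFX_allocations n m v)"
  proof (intro allI impI)
    fix v assume mv: "monotone_valuation m v"
    obtain A where A: "A \<in> allocations n m" "EFX n m v A" "\<forall>i<n. bundle_of m A i \<noteq> {}"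
      using exists_good[OF mv assms] by blast
    have "A \<in> EFX_allocations n m v" using A unfolding EFX_allocations_def by simp
    thus "fact n \<le> card (EFX_allocations n m v)" using count_lower A(3) by blast
  qed
  define val where "val = (\<lambda>g::nat. if g < n-1 then real m + 1 else 1)"
  define v0 where "v0 = (\<lambda>S. \<Sum>g\<in>S. (if g < n-1 then real m + 1 else 1))"
  have v0S: "v0 S = (\<Sum>g\<in>S. val g)" for S unfolding v0_def val_def by simp
  have vnn: "0 \<le> val g" for g unfolding val_def by simp
  have add: "additive_valuation m v0"
    unfolding additive_valuation_def using v0S vnn by blast
  have mono: "monotone_valuation m v0"
    unfolding monotone_valuation_def
  proof (intro conjI allI impI)
    show "v0 {} = 0" unfolding v0_def by simp
    fix S T assume "S \<subseteq> T \<and> T \<subseteq> {0..<m}"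
    hence "S \<subseteq> T" "finite T" by (auto intro: finite_subset)
    thus "v0 S \<le> v0 T" unfolding v0S by (intro sum_mono2) (auto simp: vnn)
  qed
  let ?P = "{\<sigma>. \<sigma> permutes {0..<n}}"
  let ?f = "\<lambda>\<sigma>. perm_alloc m \<sigma> (\<lambda>g. if g < n-1 then g else n-1)"
  have sub: "EFX_allocations n m v0 \<subseteq> ?f ` ?P"
    using upper[OF assms v0_def] by blast
  have finP: "finite ?P" by (rule finite_permutations) simp
  have "card (EFX_allocations n m v0) \<le> card (?f ` ?P)"
    by (rule card_mono[OF finite_imageI[OF finP] sub])
  also have "\<dots> \<le> card ?P" by (rule card_image_le[OF finP])
  also have "\<dots> = fact n" by (rule card_permutations) auto
  finally have "card (EFX_allocations n m v0) \<le> fact n" .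
  moreover have "fact n \<le> card (EFX_allocations n m v0)" using p1 mono by blast
  ultimately have "card (EFX_allocations n m v0) = fact n" by linarith
  thus ?thesis using p1 add by blast
qed

end
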